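(* Let $K\subset\mathbb{R}^n$ be a convex body with smooth boundary and let $\gamma:S^1\to\mathbb{R}^n$ be a piecewise linear closed curve. If there exists $\mathcal{N}\subset\mathbb{R}^n\setminus\{0\}$ such that $0\in\mathrm{conv}(\mathcal{N})$ and $h(K:\nu)\le h(\gamma(S^1):\nu)$ for every $\nu\in\mathcal{N}$, then $\gamma\in\mathcal{P}^+(K)$.
   Context: A convex body is a compact convex set with nonempty interior; $S^1=\mathbb{R}/\mathbb{Z}$. For compact $S\subset\mathbb{R}^n$ and $\nu\in\mathbb{R}^n$, $h(S:\nu)=\max\{s\cdot\nu:s\in S\}$. $\mathcal{P}^+(K)$ is the set of piecewise linear closed curves $\gamma:S^1\to\mathbb{R}^n$ such that $\gamma(S^1)+x\not\subset\mathrm{int}\,K$ for every $x\in\mathbb{R}^n$. $\mathrm{conv}$ denotes convex hull. *)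

theory Defs
  imports "HOL-Analysis.Analysis"
begin

definition convex_body :: "'a::euclidean_space set \<Rightarrow> bool" where
  "convex_body K \<longleftrightarrow> compact K \<and> convex K \<and> interior K \<noteq> {}"

fun Ck_on :: "nat \<Rightarrow> 'a::euclidean_space set \<Rightarrow> ('a \<Rightarrow> real) \<Rightarrow> bool" where
  "Ck_on 0 U f = continuous_on U f"
| "Ck_on (Suc k) U f =
     (\<exists>D. (\<forall>x\<in>U. (f has_derivative D x) (at x)) \<and> (\<forall>b\<in>Basis. Ck_on k U (\<lambda>x. D x b)))"

definition smooth_on :: "'a::euclidean_space set \<Rightarrow> ('a \<Rightarrow> real) \<Rightarrow> bool" where
  "smooth_on U f \<longleftrightarrow> (\<forall>k. Ck_on k U f)"

definition smooth_boundary :: "'a::euclidean_space set \<Rightarrow> bool" where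
  "smooth_boundary K \<longleftrightarrow>
     (\<forall>x\<in>frontier K. \<exists>U f D. open U \<and> x \<in> U \<and> smooth_on U f \<and>
        (f has_derivative D) (at x) \<and> D \<noteq> (\<lambda>h. 0) \<and>
        K \<inter> U = {y\<in>U. f y \<le> 0})"

text \<open>Closed curves S^1 = R/Z -> R^n are represented as 1-periodic maps
  real => 'a; the image gamma(S^1) is gamma ` {0..1}. Piecewise linear: there is a
  finite partition of [0,1] on whose consecutive pieces gamma is affine.\<close>
definition pl_closed_curve :: "(real \<Rightarrow> 'a::euclidean_space) \<Rightarrow> bool" where
  "pl_closed_curve \<gamma> \<longleftrightarrow>
     (\<forall>t. \<gamma> (t + 1) = \<gamma> t) \<and>
     (\<exists>S. finite S \<and> S \<subseteq> {0..1} \<and> 0 \<in> S \<and> 1 \<in> S \<and>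
        (\<forall>a\<in>S. \<forall>b\<in>S. a < b \<and> {a<..<b} \<inter> S = {} \<longrightarrow>
           (\<forall>t\<in>{a..b}. \<gamma> t = \<gamma> a + ((t - a) / (b - a)) *\<^sub>R (\<gamma> b - \<gamma> a))))"

definition curve_image :: "(real \<Rightarrow> 'a) \<Rightarrow> 'a set" where
  "curve_image \<gamma> = \<gamma> ` {0..1}"

definition support_fun :: "'a::euclidean_space set \<Rightarrow> 'a \<Rightarrow> real" where
  "support_fun S \<nu> = Sup ((\<lambda>s. s \<bullet> \<nu>) ` S)"

definition Pplus :: "'a::euclidean_space set \<Rightarrow> (real \<Rightarrow> 'a) set" where
  "Pplus K = {\<gamma>. pl_closed_curve \<gamma> \<and>
                  (\<forall>x. \<not> ((\<lambda>s. s + x) ` curve_image \<gamma> \<subseteq> interior K))}"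

end

theory Submission
  imports Defs
begin

lemma curve_image_compact:
  assumes "pl_closed_curve \<gamma>"
  shows "compact (curve_image \<gamma>)"
proof -
  obtain S where S: "finite S" "S \<subseteq> {0..1}" "0 \<in> S" "1 \<in> S"
    and aff: "\<forall>a\<in>S. \<forall>b\<in>S. a < b \<and> {a<..<b} \<inter> S = {} \<longrightarrow>
           (\<forall>t\<in>{a..b}. \<gamma> t = \<gamma> a + ((t - a) / (b - a)) *\<^sub>R (\<gamma> b - \<gamma> a))"
    using assms unfolding pl_closed_curve_def by blast
  define P where "P = {(a,b). a \<in> S \<and> b \<in> S \<and> a < b \<and> {a<..<b} \<inter> S = {}}"
  have Pfin: "finite P" unfolding P_def
    by (rule finite_subset[of _ "S \<times> S"]) (auto simp: S(1))
  have cov: "{0..1::real} \<subseteq> S \<union> (\<Union>(a,b)\<in>P. {a..b})"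
  proof
    fix t :: real assume t: "t \<in> {0..1}"
    show "t \<in> S \<union> (\<Union>(a,b)\<in>P. {a..b})"
    proof (cases "t \<in> S")
      case True then show ?thesis by blast
    next
      case False
      with t S have t01: "0 < t" "t < 1"
        by (metis atLeastAtMost_iff order_le_less)+
      define a where "a = Max {s\<in>S. s < t}"
      define b where "b = Min {s\<in>S. s > t}"
      have A: "finite {s\<in>S. s < t}" "{s\<in>S. s < t} \<noteq> {}" using S t01 by auto
      have B: "finite {s\<in>S. s > t}" "{s\<in>S. s > t} \<noteq> {}" using S t01 by auto
      have aS: "a \<in> S" "a < t" using Max_in[OF A] unfolding a_def by auto
      have bS: "b \<in> S" "t < b" using Min_in[OF B] unfolding b_def by auto
      have "{a<..<b} \<inter> S = {}"
      proof (rule ccontr)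
        assume "{a<..<b} \<inter> S \<noteq> {}"
        then obtain s where s: "s \<in> S" "a < s" "s < b" by auto
        show False
        proof (cases "s < t")
          case True
          then have "s \<le> a" unfolding a_def using A s by (intro Max_ge) auto
          then show False using s by simp
        next
          case f: False
          with False s have "s > t" by (cases "s = t") auto
          then have "b \<le> s" unfolding b_def using B s by (intro Min_le) auto
          then show False using s by simp
        qed
      qed
      then have "(a,b) \<in> P" unfolding P_def using aS bS by auto
      then show ?thesis using aS bS by force
    qed
  qed
  have sub: "{0..1::real} = S \<union> (\<Union>(a,b)\<in>P. {a..b})"
  proof
    show "S \<union> (\<Union>(a,b)\<in>P. {a..b}) \<subseteq> {0..1}"
      using S(2) unfolding P_def by fastforce
  qed (rule cov)
  have cp: "compact (\<gamma> ` {a..b})" if "(a,b) \<in> P" for a b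
  proof -
    have "\<forall>t\<in>{a..b}. \<gamma> t = \<gamma> a + ((t - a) / (b - a)) *\<^sub>R (\<gamma> b - \<gamma> a)"
      using aff that unfolding P_def by blast
    moreover have "continuous_on {a..b} (\<lambda>t. \<gamma> a + ((t - a) / (b - a)) *\<^sub>R (\<gamma> b - \<gamma> a))"
      using that unfolding P_def by (intro continuous_intros) auto
    ultimately have "continuous_on {a..b} \<gamma>"
      using continuous_on_eq by (metis (no_types, lifting))
    then show ?thesis by (intro compact_continuous_image) auto
  qed
  have "curve_image \<gamma> = \<gamma> ` S \<union> (\<Union>(a,b)\<in>P. \<gamma> ` {a..b})"
    unfolding curve_image_def by (subst sub) auto
  moreover have "compact (\<gamma> ` S)" using S(1) by (intro finite_imp_compact) auto
  moreover have "compact (\<Union>(a,b)\<in>P. \<gamma> ` {a..b})"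
    using Pfin cp by (intro compact_Union) auto
  ultimately show ?thesis by (simp add: compact_Un)
qed

theorem lemma6p1:
  fixes K :: "'a::euclidean_space set" and \<gamma> :: "real \<Rightarrow> 'a" and N :: "'a set"
  assumes "convex_body K" and "smooth_boundary K"
    and "pl_closed_curve \<gamma>"
    and "N \<subseteq> - {0}" and "0 \<in> convex hull N"
    and "\<forall>\<nu>\<in>N. support_fun K \<nu> \<le> support_fun (curve_image \<gamma>) \<nu>"
  shows "\<gamma> \<in> Pplus K"
proof -
  have Kc: "compact K" using assms(1) unfolding convex_body_def by blast
  define C where "C = curve_image \<gamma>"
  have Cc: "compact C" unfolding C_def by (rule curve_image_compact[OF assms(3)])
  have Cne: "C \<noteq> {}" unfolding C_def curve_image_def by auto
  have "\<forall>x. \<not> ((\<lambda>s. s + x) ` C \<subseteq> interior K)"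
  proof (intro allI notI)
    fix x assume inK: "(\<lambda>s. s + x) ` C \<subseteq> interior K"
    have neg: "x \<bullet> \<nu> < 0" if nu: "\<nu> \<in> N" for \<nu>
    proof -
      have nz: "\<nu> \<noteq> 0" using nu assms(4) by auto
      have "compact ((\<lambda>s. s \<bullet> \<nu>) ` C)"
        using Cc by (intro compact_continuous_image continuous_intros)
      then obtain c where c: "c \<in> C" "\<forall>y\<in>C. y \<bullet> \<nu> \<le> c \<bullet> \<nu>"
        using Cne compact_attains_sup[of "(\<lambda>s. s \<bullet> \<nu>) ` C"] by auto
      have hC: "support_fun C \<nu> = c \<bullet> \<nu>"
        unfolding support_fun_def using c by (intro cSup_eq_maximum) auto
      have "c + x \<in> interior K" using inK c by auto
      then obtain e where e: "e > 0" "ball (c + x) e \<subseteq> K"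
        using mem_interior by blast
      define p where "p = (c + x) + (e / 2 / norm \<nu>) *\<^sub>R \<nu>"
      have "dist (c + x) p = e / 2" unfolding p_def dist_norm using nz e by simp
      then have pK: "p \<in> K" using e by auto
      have pv: "p \<bullet> \<nu> = c \<bullet> \<nu> + x \<bullet> \<nu> + e / 2 * norm \<nu>"
        unfolding p_def using nz by (simp add: inner_add_left power2_norm_eq_inner[symmetric] power2_eq_square)
      have "bounded ((\<lambda>s. s \<bullet> \<nu>) ` K)"
        using Kc by (intro compact_imp_bounded compact_continuous_image continuous_intros)
      then have "bdd_above ((\<lambda>s. s \<bullet> \<nu>) ` K)" by (rule bounded_imp_bdd_above)
      then have "p \<bullet> \<nu> \<le> support_fun K \<nu>"
        unfolding support_fun_def using pK by (intro cSup_upper) auto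
      moreover have "support_fun K \<nu> \<le> c \<bullet> \<nu>" using assms(6) nu hC unfolding C_def by auto
      moreover have "e / 2 * norm \<nu> > 0" using e nz by simp
      ultimately show ?thesis using pv by linarith
    qed
    obtain S u where S: "finite S" "S \<subseteq> N" "\<forall>v\<in>S. 0 \<le> u v" "sum u S = 1"
      "(\<Sum>v\<in>S. u v *\<^sub>R v) = 0"
      using assms(5) unfolding convex_hull_explicit by blast
    have "x \<bullet> (\<Sum>v\<in>S. u v *\<^sub>R v) = (\<Sum>v\<in>S. u v * (x \<bullet> v))"
      by (simp add: inner_sum_right)
    then have z: "(\<Sum>v\<in>S. u v * (- (x \<bullet> v))) = 0" using S(5)
      by (simp add: sum_negf)
    obtain v where v: "v \<in> S" "u v > 0"
    proof (rule ccontr)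
      assume "\<not> thesis"
      then have "\<forall>v\<in>S. u v = 0" using S(3) that by force
      then show False using S(4) by simp
    qed
    have "0 < (\<Sum>v\<in>S. u v * (- (x \<bullet> v)))"
    proof (rule sum_pos2[OF S(1) v(1)])
      show "0 < u v * - (x \<bullet> v)" using v neg S(2) by (intro mult_pos_pos) auto
      show "\<And>i. i \<in> S \<Longrightarrow> 0 \<le> u i * - (x \<bullet> i)"
        using S(2,3) neg by (intro mult_nonneg_nonneg) (auto simp: less_imp_le)
    qed
    then show False using z by simp
  qed
  then show ?thesis unfolding Pplus_def C_def using assms(3) by blast
qed

end
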